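(* For every $k\ge 1$, the bi-hypergraph obtained from $\mathcal H_{2k+1}$ by removing the edge $\{v_{2k+1,1},v_{2k+1,2},v_{2k+1,3}\}$ and adding the edges $\{v_{1,j},v_{2k+1,j},v_{2k+1,j+1}\}$ for all $j\in[3]$ is minimal uncolorable.
   Context: A bi-hypergraph $\mathcal H=(V,E)$ consists of a finite vertex set $V$ and a set $E$ of subsets of $V$, called edges, with no edge contained in another. A mapping $f:V\to\mathbb N$ is a proper coloring of $\mathcal H$ if $1<|f(e)|<|e|$ for every $e\in E$, where $f(e)=\{f(v):v\in e\}$. $\mathcal H$ is colorable if it has a proper coloring, and uncolorable otherwise. A subhypergraph of $\mathcal H$ is a bi-hypergraph $(V',E')$ with $V'\subseteq V$, $E'\subseteq E$; $\mathcal H$ is minimal uncolorable if it is uncolorable but every proper subhypergraph of it is colorable. For $k\ge 2$, $\mathcal H_k$ is the $3$-uniform bi-hypergraph with vertex set $\{v_{i,j}: i\in[k], j\in[3]\}$ (all distinct), with the convention $v_{i,4}=v_{i,1}$, $v_{i,5}=v_{i,2}$, whose edges are the sets $\{v_{i,1},v_{i,2},v_{i,3}\}$ for all $i\in[k]$ and the sets $\{v_{q+1,j},v_{q,j},v_{q,j+t}\}$ for all $q\in[k-1]$, $j\in[3]$, $t\in\{1,2\}$. *)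

theory Defs
  imports Main
begin

type_synonym 'a hypergraph = "'a set \<times> 'a set set"

definition bi_hypergraph :: "'a hypergraph \<Rightarrow> bool" where
  "bi_hypergraph H \<longleftrightarrow> finite (fst H) \<and> (\<forall>e\<in>snd H. e \<subseteq> fst H)
     \<and> (\<forall>e\<in>snd H. \<forall>e'\<in>snd H. e \<subseteq> e' \<longrightarrow> e = e')"

definition proper_coloring :: "'a hypergraph \<Rightarrow> ('a \<Rightarrow> nat) \<Rightarrow> bool" where
  "proper_coloring H f \<longleftrightarrow> (\<forall>e\<in>snd H. 1 < card (f ` e) \<and> card (f ` e) < card e)"

definition colorable :: "'a hypergraph \<Rightarrow> bool" where
  "colorable H \<longleftrightarrow> (\<exists>f. proper_coloring H f)"

definition subhypergraph :: "'a hypergraph \<Rightarrow> 'a hypergraph \<Rightarrow> bool" where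
  "subhypergraph H' H \<longleftrightarrow> bi_hypergraph H' \<and> fst H' \<subseteq> fst H \<and> snd H' \<subseteq> snd H"

definition minimal_uncolorable :: "'a hypergraph \<Rightarrow> bool" where
  "minimal_uncolorable H \<longleftrightarrow> bi_hypergraph H \<and> \<not> colorable H \<and>
     (\<forall>H'. subhypergraph H' H \<and> H' \<noteq> H \<longrightarrow> colorable H')"

definition idx3 :: "nat \<Rightarrow> nat" where
  "idx3 m = (m - 1) mod 3 + 1"

text \<open>Vertex v_{i,j} is the pair (i,j).\<close>
definition Hk_vertices :: "nat \<Rightarrow> (nat \<times> nat) set" where
  "Hk_vertices k = {1..k} \<times> {1..3}"

definition Hk_edges :: "nat \<Rightarrow> (nat \<times> nat) set set" where
  "Hk_edges k =
     {{(i,1),(i,2),(i,3)} | i. i \<in> {1..k}} \<union>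
     {{(q+1,j),(q,j),(q, idx3 (j+t))} | q j t. q \<in> {1..k-1} \<and> j \<in> {1..3} \<and> t \<in> {1,2}}"

definition Hk :: "nat \<Rightarrow> (nat \<times> nat) hypergraph" where
  "Hk k = (Hk_vertices k, Hk_edges k)"

definition Gk :: "nat \<Rightarrow> (nat \<times> nat) hypergraph" where
  "Gk k = (let n = 2*k+1 in
     (Hk_vertices n,
      (Hk_edges n - {{(n,1),(n,2),(n,3)}}) \<union>
      {{(1,j),(n,j),(n, idx3 (j+1))} | j. j \<in> {1..3}}))"

end

theory Submission
  imports Defs
begin


lemma idx3_simps: "idx3 2 = 2" "idx3 3 = 3" "idx3 4 = 1" "idx3 5 = 2"
   "idx3 (Suc (Suc 0)) = 2" "idx3 (Suc (Suc (Suc 0))) = 3"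
  by (simp_all add: idx3_def)

definition good3 :: "nat \<Rightarrow> nat \<Rightarrow> nat \<Rightarrow> bool" where
  "good3 x y z \<longleftrightarrow> (x = y \<and> y \<noteq> z) \<or> (x = z \<and> x \<noteq> y) \<or> (y = z \<and> x \<noteq> y)"

lemma card3_eq2: "card {x,y,z::nat} = 2 \<longleftrightarrow> good3 x y z"
  unfolding good3_def by (auto simp: card_insert_if)

definition stp :: "nat\<Rightarrow>nat\<Rightarrow>nat\<Rightarrow>nat\<Rightarrow>nat\<Rightarrow>nat\<Rightarrow>bool" where
 "stp u1 u2 u3 w1 w2 w3 \<longleftrightarrow> good3 w1 u1 u2 \<and> good3 w1 u1 u3 \<and> good3 w2 u2 u3 \<and> good3 w2 u2 u1
    \<and> good3 w3 u3 u1 \<and> good3 w3 u3 u2"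

lemma two_step:
  assumes "good3 u1 u2 u3" "stp u1 u2 u3 w1 w2 w3" "good3 w1 w2 w3" "stp w1 w2 w3 z1 z2 z3" "good3 z1 z2 z3"
  shows "z1 = u1 \<and> z2 = u2 \<and> z3 = u3"
  using assms unfolding good3_def stp_def by metis

lemma final:
  assumes "good3 u1 u2 u3" "stp u1 u2 u3 w1 w2 w3" "good3 w1 w2 w3" "stp w1 w2 w3 z1 z2 z3"
   "good3 u1 z1 z2" "good3 u2 z2 z3" "good3 u3 z3 z1"
  shows False
  using assms unfolding good3_def stp_def by metis


definition tri :: "nat \<Rightarrow> (nat\<times>nat) set" where "tri i = {(i,1),(i,2),(i,3)}"
definition trn :: "nat \<Rightarrow> nat \<Rightarrow> nat \<Rightarrow> (nat\<times>nat) set" where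
  "trn q j t = {(q+1,j),(q,j),(q, idx3 (j+t))}"
definition cls :: "nat \<Rightarrow> nat \<Rightarrow> (nat\<times>nat) set" where
  "cls n j = {(1,j),(n,j),(n, idx3 (j+1))}"

lemma H1: "Hk_edges (2*k+1) = tri ` {1..2*k+1} \<union> {trn q j t | q j t. q \<in> {1..2*k} \<and> j \<in> {1..3} \<and> t \<in> {1,2}}"
proof -
  have "{{(i,1),(i,2),(i,3)} | i. i \<in> {1..2*k+1::nat}} = tri ` {1..2*k+1}" unfolding tri_def by blast
  moreover have "{{(q+1,j),(q,j),(q, idx3 (j+t))} | q j t. q \<in> {1..2*k+1-1} \<and> j \<in> {1..3::nat} \<and> t \<in> {1,2::nat}}
     = {trn q j t | q j t. q \<in> {1..2*k} \<and> j \<in> {1..3} \<and> t \<in> {1,2}}" unfolding trn_def by simp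
  ultimately show ?thesis unfolding Hk_edges_def by simp
qed
lemma Cl: "{{(1,j),(2*k+1,j),(2*k+1, idx3 (j+1))} | j. j \<in> {1..3::nat}} = cls (2*k+1) ` {1..3}"
    unfolding cls_def by blast

lemma tn: "{(2*k+1,1),(2*k+1,2),(2*k+1,3::nat)} = tri (2*k+1)" by (simp add: tri_def)
lemma Aeq: "snd (Gk k) = (tri ` {1..2*k+1} \<union> {trn q j t | q j t. q \<in> {1..2*k} \<and> j \<in> {1..3} \<and> t \<in> {1,2}}
     - {tri (2*k+1)}) \<union> cls (2*k+1) ` {1..3}"
  unfolding Gk_def Let_def snd_conv H1 Cl[symmetric] tn by (rule refl)
lemma tri_eq: assumes "tri i = tri i'" shows "i = i'"
proof -
  have "(i,1) \<in> tri i" by (simp add: tri_def)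
  then have "(i,1) \<in> tri i'" using assms by simp
  then show ?thesis by (simp add: tri_def)
qed

lemma mem_edges:
  assumes "1 \<le> k"
  shows "e \<in> snd (Gk k) \<longleftrightarrow> (\<exists>i\<in>{1..2*k}. e = tri i) \<or>
     (\<exists>q\<in>{1..2*k}. \<exists>j\<in>{1..3}. \<exists>t\<in>{1,2}. e = trn q j t) \<or> (\<exists>j\<in>{1..3}. e = cls (2*k+1) j)"
proof -
  have B: "trn q j t \<noteq> tri (2*k+1)" if "q \<le> 2*k" for q j t
  proof
    assume "trn q j t = tri (2*k+1)"
    then have "(q,j) \<in> tri (2*k+1)" unfolding trn_def by blast
    then show False using that unfolding tri_def by auto
  qed
  have T: "tri i \<noteq> tri (2*k+1)" if "i \<le> 2*k" for i
  proof
    assume "tri i = tri (2*k+1)"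
    then have "i = 2*k+1" by (rule tri_eq)
    with that show False by simp
  qed
  let ?R = "{trn q j t | q j t. q \<in> {1..2*k} \<and> j \<in> {1..3} \<and> t \<in> {1,2}}"
  have Rm: "e \<in> ?R \<longleftrightarrow> (\<exists>q\<in>{1..2*k}. \<exists>j\<in>{1..3}. \<exists>t\<in>{1,2}. e = trn q j t)"
    by (simp only: mem_Collect_eq Bex_def) blast
  have Tm: "(e \<in> tri ` {1..2*k+1} \<and> e \<noteq> tri (2*k+1)) \<longleftrightarrow> (\<exists>i\<in>{1..2*k}. e = tri i)"
  proof
    assume "e \<in> tri ` {1..2*k+1} \<and> e \<noteq> tri (2*k+1)"
    then obtain i where i: "i \<in> {1..2*k+1}" "e = tri i" "e \<noteq> tri (2*k+1)" by blast
    then have "i \<noteq> 2*k+1" by blast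
    with i have "i \<in> {1..2*k}" by simp
    with i show "\<exists>i\<in>{1..2*k}. e = tri i" by blast
  next
    assume "\<exists>i\<in>{1..2*k}. e = tri i"
    then obtain i where i: "i \<in> {1..2*k}" "e = tri i" by blast
    then have "i \<in> {1..2*k+1}" by simp
    moreover have "e \<noteq> tri (2*k+1)" using T i by simp
    ultimately show "e \<in> tri ` {1..2*k+1} \<and> e \<noteq> tri (2*k+1)" using i by blast
  qed
  have Rn: "e \<noteq> tri (2*k+1)" if h: "e \<in> ?R"
  proof -
    obtain q j t where "q \<in> {1..2*k}" "e = trn q j t" using h unfolding Rm by blast
    then show ?thesis using B[of q j t] by simp
  qed
  have Cm: "e \<in> cls (2*k+1) ` {1..3} \<longleftrightarrow> (\<exists>j\<in>{1..3}. e = cls (2*k+1) j)" by blast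
  have "e \<in> snd (Gk k) \<longleftrightarrow> (e \<in> tri ` {1..2*k+1} \<and> e \<noteq> tri (2*k+1)) \<or> e \<in> ?R \<or> e \<in> cls (2*k+1) ` {1..3}"
    unfolding Aeq using Rn by blast
  then show ?thesis unfolding Tm Rm Cm .
qed

lemma card_tri: "card (tri i) = 3" unfolding tri_def by simp
lemma card_trn: assumes "j \<in> {1..3}" "t \<in> {1,2}" shows "card (trn q j t) = 3"
proof -
  have "j = 1 \<or> j = 2 \<or> j = 3" "t = 1 \<or> t = 2" using assms by auto
  then show ?thesis unfolding trn_def by (elim disjE; simp add: idx3_def)
qed
lemma card_cls: assumes "j \<in> {1..3}" "n \<noteq> 1" shows "card (cls n j) = 3"
proof -
  have "j = 1 \<or> j = 2 \<or> j = 3" using assms by auto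
  then show ?thesis unfolding cls_def using assms(2) by (elim disjE; simp add: idx3_def)
qed

lemma img_tri: "card (f ` tri i) = 2 \<longleftrightarrow> good3 (f(i,1)) (f(i,2)) (f(i,3))"
  unfolding tri_def by (simp add: card3_eq2)
lemma img_trn: "card (f ` trn q j t) = 2 \<longleftrightarrow> good3 (f(q+1,j)) (f(q,j)) (f(q,idx3(j+t)))"
  unfolding trn_def by (simp add: card3_eq2)
lemma img_cls: "card (f ` cls n j) = 2 \<longleftrightarrow> good3 (f(1,j)) (f(n,j)) (f(n,idx3(j+1)))"
  unfolding cls_def by (simp add: card3_eq2)

lemma edge_cases:
  assumes "1 \<le> k" "e \<in> snd (Gk k)"
  obtains (T) i where "i \<in> {1..2*k}" "e = tri i"
   | (R) q j t where "q \<in> {1..2*k}" "j \<in> {1..3}" "t \<in> {1,2}" "e = trn q j t"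
   | (C) j where "j \<in> {1..3}" "e = cls (2*k+1) j"
  using assms(2) unfolding mem_edges[OF assms(1)] by blast

lemma tri_mem: "1 \<le> k \<Longrightarrow> i \<in> {1..2*k} \<Longrightarrow> tri i \<in> snd (Gk k)"
  using mem_edges by blast
lemma trn_mem: "1 \<le> k \<Longrightarrow> q \<in> {1..2*k} \<Longrightarrow> j \<in> {1..3} \<Longrightarrow> t \<in> {1,2} \<Longrightarrow> trn q j t \<in> snd (Gk k)"
  using mem_edges by blast
lemma cls_mem: "1 \<le> k \<Longrightarrow> j \<in> {1..3} \<Longrightarrow> cls (2*k+1) j \<in> snd (Gk k)"
  using mem_edges by blast

lemma card_edge:
  assumes "1 \<le> k" "e \<in> snd (Gk k)" shows "card e = 3"
  using assms
proof (cases rule: edge_cases)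
  case (T i) then show ?thesis by (simp add: card_tri)
next
  case (R q j t) then show ?thesis by (simp add: card_trn)
next
  case (C j) then show ?thesis using assms(1) by (simp add: card_cls)
qed

lemma edges_sub: assumes "1 \<le> k" "e \<in> snd (Gk k)" shows "e \<subseteq> fst (Gk k)"
proof -
  have V: "fst (Gk k) = {1..2*k+1} \<times> {1..3}" by (simp add: Gk_def Hk_vertices_def Let_def)
  have i3: "idx3 m \<in> {1..3}" for m by (simp add: idx3_def)
  show ?thesis using assms
  proof (cases rule: edge_cases)
    case (T i) then show ?thesis unfolding V tri_def by auto
  next
    case (R q j t) then show ?thesis using i3[of "j+t"] unfolding V trn_def by auto
  next
    case (C j) then show ?thesis using i3[of "j+1"] unfolding V cls_def by auto
  qed
qed

lemma bi: assumes "1 \<le> k" shows "bi_hypergraph (Gk k)"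
proof -
  have V: "fst (Gk k) = {1..2*k+1} \<times> {1..3}" by (simp add: Gk_def Hk_vertices_def Let_def)
  have "finite (fst (Gk k))" unfolding V by simp
  moreover have "\<forall>e\<in>snd (Gk k). e \<subseteq> fst (Gk k)" using edges_sub assms by blast
  moreover have "e = e'" if "e \<in> snd (Gk k)" "e' \<in> snd (Gk k)" "e \<subseteq> e'" for e e'
  proof -
    have "finite e'" using edges_sub[OF assms that(2)] \<open>finite (fst (Gk k))\<close> finite_subset by blast
    then show ?thesis using card_subset_eq[of e' e] that card_edge[OF assms] by simp
  qed
  ultimately show ?thesis unfolding bi_hypergraph_def by blast
qed

lemma good_all:
  assumes "1 \<le> k" "proper_coloring (Gk k) f" "e \<in> snd (Gk k)"
  shows "card (f ` e) = 2"
  using assms card_edge[OF assms(1) assms(3)] unfolding proper_coloring_def by fastforce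

lemma uncol: assumes "1 \<le> k" shows "\<not> colorable (Gk k)"
proof
  assume "colorable (Gk k)"
  then obtain f where f: "proper_coloring (Gk k) f" unfolding colorable_def by blast
  have T: "good3 (f(i,1)) (f(i,2)) (f(i,3))" if "i \<in> {1..2*k}" for i
    using good_all[OF assms f tri_mem[OF assms that]] unfolding img_tri .
  have R: "good3 (f(q+1,j)) (f(q,j)) (f(q,idx3(j+t)))" if "q \<in> {1..2*k}" "j \<in> {1..3}" "t \<in> {1,2}" for q j t
    using good_all[OF assms f trn_mem[OF assms that]] unfolding img_trn .
  have C: "good3 (f(1,j)) (f(2*k+1,j)) (f(2*k+1,idx3(j+1)))" if "j \<in> {1..3}" for j
    using good_all[OF assms f cls_mem[OF assms that]] unfolding img_cls .
  have S: "stp (f(q,1)) (f(q,2)) (f(q,3)) (f(q+1,1)) (f(q+1,2)) (f(q+1,3))" if "q \<in> {1..2*k}" for q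
    using R[OF that, of 1 1] R[OF that, of 1 2] R[OF that, of 2 1] R[OF that, of 2 2]
      R[OF that, of 3 1] R[OF that, of 3 2]
    unfolding stp_def by (simp add: idx3_simps)
  have I: "2*m+1 \<le> 2*k-1 \<longrightarrow> f(2*m+1,1) = f(1,1) \<and> f(2*m+1,2) = f(1,2) \<and> f(2*m+1,3) = f(1,3)" for m
  proof (induction m)
    case 0 then show ?case by simp
  next
    case (Suc m)
    show ?case
    proof
      assume h: "2*Suc m+1 \<le> 2*k-1"
      let ?a = "2*m+1"
      have "f(?a+1+1,1) = f(?a,1) \<and> f(?a+1+1,2) = f(?a,2) \<and> f(?a+1+1,3) = f(?a,3)"
      proof -
        have h1: "?a \<in> {1..2*k}" "?a+1 \<in> {1..2*k}" "?a+1+1 \<in> {1..2*k}" using h by auto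
        show ?thesis by (rule two_step[OF T[OF h1(1)] S[OF h1(1)] T[OF h1(2)] S[OF h1(2)] T[OF h1(3)]])
      qed
      then show "f(2*Suc m+1,1) = f(1,1) \<and> f(2*Suc m+1,2) = f(1,2) \<and> f(2*Suc m+1,3) = f(1,3)"
        using Suc h by simp
    qed
  qed
  have eq: "2*(k-1)+1 = 2*k-1" using assms by simp
  have L: "f(2*k-1,1) = f(1,1) \<and> f(2*k-1,2) = f(1,2) \<and> f(2*k-1,3) = f(1,3)"
    using I[of "k-1"] unfolding eq by simp
  have e1: "2*k-1+1 = 2*k" "2*k+1 = 2*k+1" using assms by auto
  have S1: "stp (f(1,1)) (f(1,2)) (f(1,3)) (f(2*k,1)) (f(2*k,2)) (f(2*k,3))"
    using S[of "2*k-1"] L assms by (simp add: e1)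
  show False
    apply (rule final[OF T[of 1] S1 T[of "2*k"] S[of "2*k"]])
    using C[of 1] C[of 2] C[of 3] assms by (simp_all add: idx3_simps)
qed



definition cT :: "nat \<Rightarrow> nat \<Rightarrow> nat \<times> nat \<Rightarrow> nat" where
 "cT i n = (\<lambda>(l,p). if l < i then (if p = 3 then (if odd l then 1 else 0) else (if odd l then 0 else 1))
   else if l = i then (if odd i then 0 else 1)
   else if l < n then (if p = 3 then (if even l then 2 else (if odd i then 1 else 0))
                       else (if even l then (if odd i then 1 else 0) else 2))
   else 2)"

lemma col_tri:
  fixes i k :: nat
  assumes "1 \<le> i" "i \<le> 2*k"
  shows "\<exists>f. (\<forall>i'\<in>{1..2*k}. i' \<noteq> i \<longrightarrow> good3 (f(i',1)) (f(i',2)) (f(i',3)))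
    \<and> (\<forall>q\<in>{1..2*k}. \<forall>j\<in>{1..3}. \<forall>t\<in>{1,2}. good3 (f(q+1,j)) (f(q,j)) (f(q,idx3(j+t))))
    \<and> (\<forall>j\<in>{1..3}. good3 (f(1,j)) (f(2*k+1,j)) (f(2*k+1,idx3(j+1))))"
proof (intro exI conjI ballI impI)
  let ?f = "cT i (2*k+1)"
  fix i' assume "i' \<in> {1..2*k}" "i' \<noteq> i"
  then show "good3 (?f(i',1)) (?f(i',2)) (?f(i',3))"
    by (auto simp: cT_def good3_def idx3_def; presburger)
next
  let ?f = "cT i (2*k+1)"
  fix q j t assume q: "q \<in> {1..2*k}" and j: "j \<in> {1..3::nat}" and t: "t \<in> {1,2::nat}"
  from j have "j = 1 \<or> j = 2 \<or> j = 3" by auto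
  with t q assms show "good3 (?f(q+1,j)) (?f(q,j)) (?f(q,idx3(j+t)))"
    by (auto simp: cT_def good3_def idx3_def; presburger)
next
  let ?f = "cT i (2*k+1)"
  fix j assume j: "j \<in> {1..3::nat}"
  from j have "j = 1 \<or> j = 2 \<or> j = 3" by auto
  with assms show "good3 (?f(1,j)) (?f(2*k+1,j)) (?f(2*k+1,idx3(j+1)))"
    by (auto simp: cT_def good3_def idx3_def; presburger)
qed



definition cC :: "nat \<Rightarrow> nat \<times> nat \<Rightarrow> nat" where
 "cC j0 = (\<lambda>(l,p). if p = idx3(j0+2) then (if odd l then 1 else 0) else (if odd l then 0 else 1))"

lemma col_cls:
  fixes j0 k :: nat
  assumes "j0 \<in> {1..3}" "1 \<le> k"
  shows "\<exists>f. (\<forall>i'\<in>{1..2*k}. good3 (f(i',1)) (f(i',2)) (f(i',3)))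
    \<and> (\<forall>q\<in>{1..2*k}. \<forall>j\<in>{1..3}. \<forall>t\<in>{1,2}. good3 (f(q+1,j)) (f(q,j)) (f(q,idx3(j+t))))
    \<and> (\<forall>j\<in>{1..3}. j \<noteq> j0 \<longrightarrow> good3 (f(1,j)) (f(2*k+1,j)) (f(2*k+1,idx3(j+1))))"
proof (intro exI conjI ballI impI)
  let ?f = "cC j0"
  have j0: "j0 = 1 \<or> j0 = 2 \<or> j0 = 3" using assms by auto
  fix i' assume "i' \<in> {1..2*k}"
  then show "good3 (?f(i',1)) (?f(i',2)) (?f(i',3))"
    using j0 by (elim disjE; cases "odd i'"; simp add: cC_def good3_def idx3_def)
next
  let ?f = "cC j0"
  have j0: "j0 = 1 \<or> j0 = 2 \<or> j0 = 3" using assms by auto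
  fix q j t assume q: "q \<in> {1..2*k}" and j: "j \<in> {1..3::nat}" and t: "t \<in> {1,2::nat}"
  from j have jj: "j = 1 \<or> j = 2 \<or> j = 3" by auto
  from t have tt: "t = 1 \<or> t = 2" by auto
  show "good3 (?f(q+1,j)) (?f(q,j)) (?f(q,idx3(j+t)))"
    using jj tt j0 by (elim disjE; cases "odd q"; simp add: cC_def good3_def idx3_def)
next
  let ?f = "cC j0"
  have j0: "j0 = 1 \<or> j0 = 2 \<or> j0 = 3" using assms by auto
  fix j assume j: "j \<in> {1..3::nat}" "j \<noteq> j0"
  from j have "j = 1 \<or> j = 2 \<or> j = 3" by auto
  then show "good3 (?f(1,j)) (?f(2*k+1,j)) (?f(2*k+1,idx3(j+1)))"
    using j j0 by (elim disjE; simp add: cC_def good3_def idx3_def)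
qed



definition cB :: "nat \<Rightarrow> nat \<Rightarrow> nat \<times> nat \<Rightarrow> nat" where
 "cB q0 j0 = (\<lambda>(l,p). if p = j0 then (if l \<le> q0 then (if odd l then 0 else 1) else (if odd l then 1 else 0))
    else if p = idx3(j0+2) then (if odd l then 0 else 1) else (if odd l then 1 else 0))"

lemma col_trn2:
  fixes j0 k q0 :: nat
  assumes "j0 \<in> {1..3}" "1 \<le> k" "q0 \<in> {1..2*k}"
  shows "\<exists>f. (\<forall>i'\<in>{1..2*k}. good3 (f(i',1)) (f(i',2)) (f(i',3)))
    \<and> (\<forall>q\<in>{1..2*k}. \<forall>j\<in>{1..3}. \<forall>t\<in>{1,2}. (q,j,t) \<noteq> (q0,j0,2) \<longrightarrow> good3 (f(q+1,j)) (f(q,j)) (f(q,idx3(j+t))))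
    \<and> (\<forall>j\<in>{1..3}. good3 (f(1,j)) (f(2*k+1,j)) (f(2*k+1,idx3(j+1))))"
proof (intro exI conjI ballI impI)
  let ?f = "cB q0 j0"
  have j0: "j0 = 1 \<or> j0 = 2 \<or> j0 = 3" using assms by auto
  fix i' assume "i' \<in> {1..2*k}"
  then show "good3 (?f(i',1)) (?f(i',2)) (?f(i',3))"
    using j0 by (elim disjE; cases "odd i'"; cases "i' \<le> q0"; simp add: cB_def good3_def idx3_def)
next
  let ?f = "cB q0 j0"
  have j0: "j0 = 1 \<or> j0 = 2 \<or> j0 = 3" using assms by auto
  fix q j t assume q: "q \<in> {1..2*k}" and j: "j \<in> {1..3::nat}" and t: "t \<in> {1,2::nat}"
    and ne: "(q,j,t) \<noteq> (q0,j0,2)"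
  from j have jj: "j = 1 \<or> j = 2 \<or> j = 3" by auto
  from t have tt: "t = 1 \<or> t = 2" by auto
  show "good3 (?f(q+1,j)) (?f(q,j)) (?f(q,idx3(j+t)))"
    using jj tt j0 ne
    by (elim disjE; cases "odd q"; cases "q0 < q"; cases "q0 = q"; simp add: cB_def good3_def idx3_def)
next
  let ?f = "cB q0 j0"
  have j0: "j0 = 1 \<or> j0 = 2 \<or> j0 = 3" using assms by auto
  fix j assume j: "j \<in> {1..3::nat}"
  from j have "j = 1 \<or> j = 2 \<or> j = 3" by auto
  then show "good3 (?f(1,j)) (?f(2*k+1,j)) (?f(2*k+1,idx3(j+1)))"
    using j0 assms by (elim disjE; simp add: cB_def good3_def idx3_def)
qed



definition cA :: "nat \<Rightarrow> nat \<Rightarrow> nat \<Rightarrow> nat \<times> nat \<Rightarrow> nat" where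
 "cA q0 j0 n = (\<lambda>(l,p).
   if l \<le> q0 then (if p = idx3(j0+1) then (if odd l then 1 else 0) else (if odd l then 0 else 1))
   else if even q0 then (if p = j0 then (if odd l then 2 else 0) else (if odd l then 0 else 2))
   else if l < n then (if p = j0 then (if even l then 2 else 1) else (if even l then 1 else 2))
   else 2)"

lemma col_trn1:
  fixes j0 k q0 :: nat
  assumes "j0 \<in> {1..3}" "1 \<le> k" "q0 \<in> {1..2*k}"
  shows "\<exists>f. (\<forall>i'\<in>{1..2*k}. good3 (f(i',1)) (f(i',2)) (f(i',3)))
    \<and> (\<forall>q\<in>{1..2*k}. \<forall>j\<in>{1..3}. \<forall>t\<in>{1,2}. (q,j,t) \<noteq> (q0,j0,1) \<longrightarrow> good3 (f(q+1,j)) (f(q,j)) (f(q,idx3(j+t))))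
    \<and> (\<forall>j\<in>{1..3}. good3 (f(1,j)) (f(2*k+1,j)) (f(2*k+1,idx3(j+1))))"
proof (intro exI conjI ballI impI)
  let ?f = "cA q0 j0 (2*k+1)"
  have j0: "j0 = 1 \<or> j0 = 2 \<or> j0 = 3" using assms by auto
  fix i' assume "i' \<in> {1..2*k}"
  then show "good3 (?f(i',1)) (?f(i',2)) (?f(i',3))"
    using j0 by (elim disjE; cases "odd i'"; cases "i' \<le> q0"; cases "odd q0"; simp add: cA_def good3_def idx3_def)
next
  let ?f = "cA q0 j0 (2*k+1)"
  have j0: "j0 = 1 \<or> j0 = 2 \<or> j0 = 3" using assms by auto
  fix q j t assume q: "q \<in> {1..2*k}" and j: "j \<in> {1..3::nat}" and t: "t \<in> {1,2::nat}"
    and ne: "(q,j,t) \<noteq> (q0,j0,1)"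
  from j have jj: "j = 1 \<or> j = 2 \<or> j = 3" by auto
  from t have tt: "t = 1 \<or> t = 2" by auto
  show "good3 (?f(q+1,j)) (?f(q,j)) (?f(q,idx3(j+t)))"
    using jj tt j0 ne q
    by (elim disjE; cases "odd q"; cases "odd q0"; cases "q0 < q"; cases "q0 = q"; cases "q < 2*k"; simp add: cA_def good3_def idx3_def)
next
  let ?f = "cA q0 j0 (2*k+1)"
  have j0: "j0 = 1 \<or> j0 = 2 \<or> j0 = 3" using assms by auto
  fix j assume j: "j \<in> {1..3::nat}"
  from j have "j = 1 \<or> j = 2 \<or> j = 3" by auto
  then show "good3 (?f(1,j)) (?f(2*k+1,j)) (?f(2*k+1,idx3(j+1)))"
    using j0 assms by (elim disjE; cases "odd q0"; simp add: cA_def good3_def idx3_def)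
qed


lemma ex_col_T:
  assumes k: "1 \<le> k" and i: "i \<in> {1..2*k}" and e: "e = tri i"
  shows "\<exists>f::nat\<times>nat\<Rightarrow>nat. \<forall>e'\<in>snd (Gk k). e' \<noteq> e \<longrightarrow> card (f ` e') = 2"
proof -
  have i1: "1 \<le> i" "i \<le> 2*k" using i by auto
  obtain f where
    Ti: "\<forall>i'\<in>{1..2*k}. i' \<noteq> i \<longrightarrow> good3 (f(i',1)) (f(i',2)) (f(i',3))" and
    Rf: "\<forall>q\<in>{1..2*k}. \<forall>j\<in>{1..3}. \<forall>t\<in>{1,2}. good3 (f(q+1,j)) (f(q,j)) (f(q,idx3(j+t)))" and
    Cf: "\<forall>j\<in>{1..3}. good3 (f(1,j)) (f(2*k+1,j)) (f(2*k+1,idx3(j+1)))"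
    using col_tri[OF i1] by blast
  show ?thesis
  proof (rule exI[of _ f], intro ballI impI)
    fix e' assume e': "e' \<in> snd (Gk k)" "e' \<noteq> e"
    from k e'(1) show "card (f ` e') = 2"
    proof (cases rule: edge_cases)
      case (T i')
      have "i' \<noteq> i"
      proof
        assume "i' = i" then have "e' = e" using T(2) e by simp
        with e'(2) show False by simp
      qed
      then have "good3 (f(i',1)) (f(i',2)) (f(i',3))" using Ti T(1) by blast
      then show ?thesis unfolding T(2) img_tri .
    next
      case (R q j t)
      have "good3 (f(q+1,j)) (f(q,j)) (f(q,idx3(j+t)))" using Rf R(1-3) by blast
      then show ?thesis unfolding R(4) img_trn .
    next
      case (C j)
      have "good3 (f(1,j)) (f(2*k+1,j)) (f(2*k+1,idx3(j+1)))" using Cf C(1) by blast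
      then show ?thesis unfolding C(2) img_cls .
    qed
  qed
qed

lemma ex_col_R:
  assumes k: "1 \<le> k" and q0: "q0 \<in> {1..2*k}" and j0: "j0 \<in> {1..3}" and t0: "t0 \<in> {1,2}"
    and e: "e = trn q0 j0 t0"
  shows "\<exists>f::nat\<times>nat\<Rightarrow>nat. \<forall>e'\<in>snd (Gk k). e' \<noteq> e \<longrightarrow> card (f ` e') = 2"
proof -
  have "\<exists>f. (\<forall>i'\<in>{1..2*k}. good3 (f(i',1)) (f(i',2)) (f(i',3)))
    \<and> (\<forall>q\<in>{1..2*k}. \<forall>j\<in>{1..3}. \<forall>t\<in>{1,2}. (q,j,t) \<noteq> (q0,j0,t0) \<longrightarrow> good3 (f(q+1,j)) (f(q,j)) (f(q,idx3(j+t))))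
    \<and> (\<forall>j\<in>{1..3}. good3 (f(1,j)) (f(2*k+1,j)) (f(2*k+1,idx3(j+1))))"
  proof -
    have "t0 = 1 \<or> t0 = 2" using t0 by auto
    then show ?thesis
    proof
      assume "t0 = 1" then show ?thesis using col_trn1[OF j0 k q0] by simp
    next
      assume "t0 = 2" then show ?thesis using col_trn2[OF j0 k q0] by simp
    qed
  qed
  then obtain f where
    Ti: "\<forall>i'\<in>{1..2*k}. good3 (f(i',1)) (f(i',2)) (f(i',3))" and
    Rf: "\<forall>q\<in>{1..2*k}. \<forall>j\<in>{1..3}. \<forall>t\<in>{1,2}. (q,j,t) \<noteq> (q0,j0,t0) \<longrightarrow> good3 (f(q+1,j)) (f(q,j)) (f(q,idx3(j+t)))" and
    Cf: "\<forall>j\<in>{1..3}. good3 (f(1,j)) (f(2*k+1,j)) (f(2*k+1,idx3(j+1)))"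
    by blast
  show ?thesis
  proof (rule exI[of _ f], intro ballI impI)
    fix e' assume e': "e' \<in> snd (Gk k)" "e' \<noteq> e"
    from k e'(1) show "card (f ` e') = 2"
    proof (cases rule: edge_cases)
      case (T i')
      have "good3 (f(i',1)) (f(i',2)) (f(i',3))" using Ti T(1) by blast
      then show ?thesis unfolding T(2) img_tri .
    next
      case (R q j t)
      have "(q,j,t) \<noteq> (q0,j0,t0)"
      proof
        assume "(q,j,t) = (q0,j0,t0)" then have "e' = e" using R(4) e by simp
        with e'(2) show False by simp
      qed
      then have "good3 (f(q+1,j)) (f(q,j)) (f(q,idx3(j+t)))" using Rf R(1-3) by blast
      then show ?thesis unfolding R(4) img_trn .
    next
      case (C j)
      have "good3 (f(1,j)) (f(2*k+1,j)) (f(2*k+1,idx3(j+1)))" using Cf C(1) by blast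
      then show ?thesis unfolding C(2) img_cls .
    qed
  qed
qed

lemma ex_col_C:
  assumes k: "1 \<le> k" and j0: "j0 \<in> {1..3}" and e: "e = cls (2*k+1) j0"
  shows "\<exists>f::nat\<times>nat\<Rightarrow>nat. \<forall>e'\<in>snd (Gk k). e' \<noteq> e \<longrightarrow> card (f ` e') = 2"
proof -
  obtain f where
    Ti: "\<forall>i'\<in>{1..2*k}. good3 (f(i',1)) (f(i',2)) (f(i',3))" and
    Rf: "\<forall>q\<in>{1..2*k}. \<forall>j\<in>{1..3}. \<forall>t\<in>{1,2}. good3 (f(q+1,j)) (f(q,j)) (f(q,idx3(j+t)))" and
    Cf: "\<forall>j\<in>{1..3}. j \<noteq> j0 \<longrightarrow> good3 (f(1,j)) (f(2*k+1,j)) (f(2*k+1,idx3(j+1)))"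
    using col_cls[OF j0 k] by blast
  show ?thesis
  proof (rule exI[of _ f], intro ballI impI)
    fix e' assume e': "e' \<in> snd (Gk k)" "e' \<noteq> e"
    from k e'(1) show "card (f ` e') = 2"
    proof (cases rule: edge_cases)
      case (T i')
      have "good3 (f(i',1)) (f(i',2)) (f(i',3))" using Ti T(1) by blast
      then show ?thesis unfolding T(2) img_tri .
    next
      case (R q j t)
      have "good3 (f(q+1,j)) (f(q,j)) (f(q,idx3(j+t)))" using Rf R(1-3) by blast
      then show ?thesis unfolding R(4) img_trn .
    next
      case (C j)
      have "j \<noteq> j0"
      proof
        assume "j = j0" then have "e' = e" using C(2) e by simp
        with e'(2) show False by simp
      qed
      then have "good3 (f(1,j)) (f(2*k+1,j)) (f(2*k+1,idx3(j+1)))" using Cf C(1) by blast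
      then show ?thesis unfolding C(2) img_cls .
    qed
  qed
qed

lemma ex_col:
  assumes k: "1 \<le> k" and e: "e \<in> snd (Gk k)"
  shows "\<exists>f::nat\<times>nat\<Rightarrow>nat. \<forall>e'\<in>snd (Gk k). e' \<noteq> e \<longrightarrow> card (f ` e') = 2"
  using k e
proof (cases rule: edge_cases)
  case (T i) then show ?thesis using ex_col_T[OF k] by blast
next
  case (R q j t) then show ?thesis using ex_col_R[OF k] by blast
next
  case (C j) then show ?thesis using ex_col_C[OF k] by blast
qed

lemma minimal_part:
  assumes k: "1 \<le> k" and sub: "subhypergraph H' (Gk k)" and ne: "H' \<noteq> Gk k"
  shows "colorable H'"
proof -
  have bH: "bi_hypergraph H'" and sV: "fst H' \<subseteq> fst (Gk k)" and sE: "snd H' \<subseteq> snd (Gk k)"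
    using sub unfolding subhypergraph_def by auto
  have "\<exists>e. e \<in> snd (Gk k) \<and> e \<notin> snd H'"
  proof (rule ccontr)
    assume "\<not> ?thesis"
    then have EE: "snd H' = snd (Gk k)" using sE by blast
    have "fst (Gk k) \<subseteq> fst H'"
    proof
      fix v assume v: "v \<in> fst (Gk k)"
      obtain l p where vp: "v = (l,p)" by (cases v)
      have V: "fst (Gk k) = {1..2*k+1} \<times> {1..3}" by (simp add: Gk_def Hk_vertices_def Let_def)
      from v have l: "l \<in> {1..2*k+1}" and p: "p \<in> {1..3}" unfolding V vp by auto
      have "\<exists>e\<in>snd (Gk k). v \<in> e"
      proof (cases "l \<le> 2*k")
        case True
        then have "l \<in> {1..2*k}" using l by simp
        then have "tri l \<in> snd (Gk k)" by (rule tri_mem[OF k])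
        moreover have "v \<in> tri l" using p unfolding vp tri_def by auto
        ultimately show ?thesis by (rule bexI[rotated])
      next
        case False
        then have "l = 2*k+1" using l by simp
        then have "v \<in> cls (2*k+1) p" unfolding vp cls_def by simp
        moreover have "cls (2*k+1) p \<in> snd (Gk k)" using cls_mem[OF k p] .
        ultimately show ?thesis by (rule bexI)
      qed
      moreover have "\<forall>e\<in>snd H'. e \<subseteq> fst H'"
        using bH[unfolded bi_hypergraph_def, THEN conjunct2, THEN conjunct1] .
      ultimately show "v \<in> fst H'" using EE by blast
    qed
    then have "fst H' = fst (Gk k)" using sV by blast
    then have "H' = Gk k" using EE by (simp add: prod_eq_iff)
    with ne show False by simp
  qed
  then obtain e where e: "e \<in> snd (Gk k)" "e \<notin> snd H'" by blast
  obtain f :: "nat\<times>nat\<Rightarrow>nat" where f: "\<forall>e'\<in>snd (Gk k). e' \<noteq> e \<longrightarrow> card (f ` e') = 2"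
    using ex_col[OF k e(1)] by blast
  have "proper_coloring H' f" unfolding proper_coloring_def
  proof
    fix e' assume e': "e' \<in> snd H'"
    then have e1: "e' \<in> snd (Gk k)" using sE by blast
    have e2: "e' \<noteq> e" using e' e by blast
    have "card (f ` e') = 2" using f e1 e2 by blast
    moreover have "card e' = 3" by (rule card_edge[OF k e1])
    ultimately show "1 < card (f ` e') \<and> card (f ` e') < card e'" by simp
  qed
  then show ?thesis unfolding colorable_def by blast
qed

theorem mainTheorem16:
  fixes k :: nat
  assumes "k \<ge> 1"
  shows "minimal_uncolorable (Gk k)"
  unfolding minimal_uncolorable_def using bi[OF assms] uncol[OF assms] minimal_part[OF assms] by blast

end
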